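(* Let $\delta\in(0,1)$. With probability at least $1-\delta$ over the random draw of the training set $S=(\boldsymbol{x}_1,\dots,\boldsymbol{x}_n)$, every linear classifier $f(\boldsymbol{x})=\langle\boldsymbol{w},\boldsymbol{x}\rangle$ that maximizes the $L^1$-margin $\gamma_1(\boldsymbol{w}):=\min_{i\in[n]}\frac{y_i\langle\boldsymbol{w},\boldsymbol{x}_i\rangle}{\|\boldsymbol{w}\|_1}$ on $S$ satisfies $$\mathbb{E}_{\boldsymbol{x}\sim\mathcal{D}_X}\big[\mathbb{1}[y^*(\boldsymbol{x})f(\boldsymbol{x})\le0]\big]\le4k\sqrt{\frac{2\log(2d)}{n}}+3\sqrt{\frac{\log(2/\delta)}{2n}}.$$
   Context: $\mathcal{D}_X$ is the uniform distribution on $\{\pm1\}^d$. $k$ is a positive odd integer. The vector $\boldsymbol{w}^*\in\mathbb{R}^d$ has its first $k$ coordinates drawn uniformly from $\{\pm1\}^k$ and all other coordinates equal to $0$; the label is $y^*(\boldsymbol{x})=\mathrm{sign}(\langle\boldsymbol{w}^*,\boldsymbol{x}\rangle)$. The training inputs $\boldsymbol{x}_1,\dots,\boldsymbol{x}_n$ are i.i.d. from $\mathcal{D}_X$ and $y_i=y^*(\boldsymbol{x}_i)$. *)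

theory Defs
  imports "HOL-Probability.Probability"
begin

text \<open>Vectors in R^d are represented as functions nat => real; only indices i < d matter.\<close>

definition ip :: "nat \<Rightarrow> (nat \<Rightarrow> real) \<Rightarrow> (nat \<Rightarrow> real) \<Rightarrow> real" where
  "ip d w x = (\<Sum>i<d. w i * x i)"

definition l1norm :: "nat \<Rightarrow> (nat \<Rightarrow> real) \<Rightarrow> real" where
  "l1norm d w = (\<Sum>i<d. \<bar>w i\<bar>)"

definition cube_dist :: "nat \<Rightarrow> (nat \<Rightarrow> real) pmf" where
  "cube_dist d = pmf_of_set (PiE {..<d} (\<lambda>_. {-1, 1}))"

definition sample_dist :: "nat \<Rightarrow> nat \<Rightarrow> (nat \<Rightarrow> (nat \<Rightarrow> real)) pmf" where
  "sample_dist d n = Pi_pmf {..<n} (\<lambda>_. 0) (\<lambda>_. cube_dist d)"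

definition label :: "nat \<Rightarrow> (nat \<Rightarrow> real) \<Rightarrow> (nat \<Rightarrow> real) \<Rightarrow> real" where
  "label d wstar x = sgn (ip d wstar x)"

definition l1_margin :: "nat \<Rightarrow> nat \<Rightarrow> (nat \<Rightarrow> real) \<Rightarrow> (nat \<Rightarrow> (nat \<Rightarrow> real)) \<Rightarrow> (nat \<Rightarrow> real) \<Rightarrow> real" where
  "l1_margin d n wstar S w =
     Min ((\<lambda>i. label d wstar (S i) * ip d w (S i) / l1norm d w) ` {..<n})"

definition max_l1_margin :: "nat \<Rightarrow> nat \<Rightarrow> (nat \<Rightarrow> real) \<Rightarrow> (nat \<Rightarrow> (nat \<Rightarrow> real)) \<Rightarrow> (nat \<Rightarrow> real) \<Rightarrow> bool" where
  "max_l1_margin d n wstar S w \<longleftrightarrow>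
     l1norm d w > 0 \<and>
     (\<forall>v. l1norm d v > 0 \<longrightarrow> l1_margin d n wstar S v \<le> l1_margin d n wstar S w)"

definition test_error :: "nat \<Rightarrow> (nat \<Rightarrow> real) \<Rightarrow> (nat \<Rightarrow> real) \<Rightarrow> real" where
  "test_error d wstar w =
     measure_pmf.expectation (cube_dist d)
       (\<lambda>x. if label d wstar x * ip d w x \<le> 0 then 1 else 0)"

end

theory Submission
  imports Defs
begin



lemma E_sum:
  assumes "finite (set_pmf p)"
  shows "measure_pmf.expectation p f = (\<Sum>a\<in>set_pmf p. f a * pmf p a)"
  by (rule integral_measure_pmf_real) (use assms in auto)

lemma E_mono:
  fixes f g :: "'a \<Rightarrow> real"
  assumes "finite (set_pmf p)" "\<And>x. x \<in> set_pmf p \<Longrightarrow> f x \<le> g x"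
  shows "measure_pmf.expectation p f \<le> measure_pmf.expectation p g"
  unfolding E_sum[OF assms(1)] by (intro sum_mono mult_right_mono) (auto simp: assms)

lemma E_pair:
  fixes f :: "'a \<times> 'b \<Rightarrow> real"
  assumes "finite (set_pmf A)" "finite (set_pmf B)"
  shows "measure_pmf.expectation (pair_pmf A B) f =
         measure_pmf.expectation A (\<lambda>a. measure_pmf.expectation B (\<lambda>b. f (a, b)))"
proof -
  have "measure_pmf.expectation (pair_pmf A B) f = (\<Sum>x\<in>set_pmf A \<times> set_pmf B. f x * pmf (pair_pmf A B) x)"
    using E_sum[of "pair_pmf A B" f] assms by simp
  also have "\<dots> = (\<Sum>a\<in>set_pmf A. \<Sum>b\<in>set_pmf B. f (a,b) * (pmf A a * pmf B b))"
    by (subst sum.cartesian_product) (auto simp: pmf_pair intro!: sum.cong)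
  also have "\<dots> = (\<Sum>a\<in>set_pmf A. (\<Sum>b\<in>set_pmf B. f (a,b) * pmf B b) * pmf A a)"
    by (simp add: sum_distrib_left sum_distrib_right mult_ac)
  also have "\<dots> = measure_pmf.expectation A (\<lambda>a. measure_pmf.expectation B (\<lambda>b. f (a, b)))"
    using assms by (simp add: E_sum)
  finally show ?thesis .
qed

lemma E_swap:
  fixes f :: "'a \<Rightarrow> 'b \<Rightarrow> real"
  assumes "finite (set_pmf A)" "finite (set_pmf B)"
  shows "measure_pmf.expectation A (\<lambda>a. measure_pmf.expectation B (\<lambda>b. f a b)) =
         measure_pmf.expectation B (\<lambda>b. measure_pmf.expectation A (\<lambda>a. f a b))"
  using assms by (simp add: E_sum sum_distrib_left sum_distrib_right mult_ac) (rule sum.swap)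

lemma finite_set_Pi_pmf:
  assumes "finite I" "\<And>i. i \<in> I \<Longrightarrow> finite (set_pmf (p i))"
  shows "finite (set_pmf (Pi_pmf I dflt p))"
  using assms by (subst set_Pi_pmf) (auto intro!: finite_PiE_dflt)

lemma set_Pi_pmf_insert:
  assumes "finite I" "a \<notin> I"
  shows "set_pmf (Pi_pmf (insert a I) dflt p) = (\<lambda>(y,S). S(a:=y)) ` (set_pmf (p a) \<times> set_pmf (Pi_pmf I dflt p))"
  using assms by (simp add: Pi_pmf_insert)

lemma E_Pi_insert:
  fixes f :: "_ \<Rightarrow> real"
  assumes "finite I" "a \<notin> I" "\<And>i. i \<in> insert a I \<Longrightarrow> finite (set_pmf (p i))"
  shows "measure_pmf.expectation (Pi_pmf (insert a I) dflt p) f =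
         measure_pmf.expectation (Pi_pmf I dflt p) (\<lambda>S. measure_pmf.expectation (p a) (\<lambda>y. f (S(a:=y))))"
proof -
  have "measure_pmf.expectation (Pi_pmf (insert a I) dflt p) f =
        measure_pmf.expectation (pair_pmf (p a) (Pi_pmf I dflt p)) (\<lambda>(y,S). f (S(a:=y)))"
    using assms by (simp add: Pi_pmf_insert case_prod_beta')
  also have "\<dots> = measure_pmf.expectation (p a) (\<lambda>y. measure_pmf.expectation (Pi_pmf I dflt p) (\<lambda>S. f (S(a:=y))))"
    using assms by (subst E_pair) (auto intro!: finite_set_Pi_pmf)
  also have "\<dots> = measure_pmf.expectation (Pi_pmf I dflt p) (\<lambda>S. measure_pmf.expectation (p a) (\<lambda>y. f (S(a:=y))))"
    using assms by (subst E_swap) (auto intro!: finite_set_Pi_pmf)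
  finally show ?thesis .
qed

lemma hoeffding_pmf:
  fixes f :: "'a \<Rightarrow> real"
  assumes "finite (set_pmf p)" "\<And>x. x \<in> set_pmf p \<Longrightarrow> f x \<in> {a..b}" "l \<ge> 0"
  shows "measure_pmf.expectation p (\<lambda>x. exp (l * (f x - measure_pmf.expectation p f))) \<le> exp (l\<^sup>2 * (b - a)\<^sup>2 / 8)"
proof (cases "l = 0")
  case True then show ?thesis by simp
next
  case False
  interpret interval_bounded_random_variable "measure_pmf p" f a b
    by unfold_locales (use assms in \<open>auto simp: AE_measure_pmf_iff\<close>)
  have "ennreal (measure_pmf.expectation p (\<lambda>x. exp (l * (f x - measure_pmf.expectation p f))))
        = nn_integral p (\<lambda>x. exp (l * (f x - measure_pmf.expectation p f)))"
    by (subst nn_integral_eq_integral) (auto intro!: integrable_measure_pmf_finite assms)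
  also have "\<dots> \<le> ennreal (exp (l\<^sup>2 * (b - a)\<^sup>2 / 8))"
    using Hoeffdings_lemma_nn_integral[of l] False assms by auto
  finally show ?thesis by (subst (asm) ennreal_le_iff) auto
qed




lemma mcdiarmid_mgf:
  fixes f :: "('i \<Rightarrow> 'a) \<Rightarrow> real"
  assumes "finite I"
  shows "(\<And>i. i \<in> I \<Longrightarrow> finite (set_pmf (p i))) \<Longrightarrow> l \<ge> 0 \<Longrightarrow>
    (\<And>S i z. S \<in> set_pmf (Pi_pmf I dflt p) \<Longrightarrow> i \<in> I \<Longrightarrow> z \<in> set_pmf (p i) \<Longrightarrow> \<bar>f (S(i:=z)) - f S\<bar> \<le> c) \<Longrightarrow>
    measure_pmf.expectation (Pi_pmf I dflt p) (\<lambda>S. exp (l * (f S - measure_pmf.expectation (Pi_pmf I dflt p) f)))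
      \<le> exp (l\<^sup>2 * c\<^sup>2 * real (card I) / 2)"
  using assms
proof (induction I arbitrary: f rule: finite_induct)
  case empty
  then show ?case by simp
next
  case (insert a I)
  let ?P = "Pi_pmf I dflt p"
  let ?Q = "Pi_pmf (insert a I) dflt p"
  let ?q = "p a"
  have finq: "finite (set_pmf ?q)" using insert by auto
  have finP: "finite (set_pmf ?P)" using insert by (intro finite_set_Pi_pmf) auto
  have finQ: "finite (set_pmf ?Q)" using insert by (intro finite_set_Pi_pmf) auto
  have suppQ: "S(a:=y) \<in> set_pmf ?Q" if "S \<in> set_pmf ?P" "y \<in> set_pmf ?q" for S y
    using that insert.hyps by (subst set_Pi_pmf_insert) auto
  define g where "g S = measure_pmf.expectation ?q (\<lambda>y. f (S(a:=y)))" for S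
  have Ef: "measure_pmf.expectation ?Q f = measure_pmf.expectation ?P g"
    unfolding g_def using insert by (subst E_Pi_insert) auto
  have bdg: "\<bar>g (S(i:=z)) - g S\<bar> \<le> c" if "S \<in> set_pmf ?P" "i \<in> I" "z \<in> set_pmf (p i)" for S i z
  proof -
    have ia: "i \<noteq> a" using that insert by auto
    have "g (S(i:=z)) - g S = measure_pmf.expectation ?q (\<lambda>y. f (S(a:=y,i:=z)) - f (S(a:=y)))"
      unfolding g_def using ia
      by (subst Bochner_Integration.integral_diff) (auto intro!: integrable_measure_pmf_finite finq simp: fun_upd_twist)
    also have "\<bar>\<dots>\<bar> \<le> measure_pmf.expectation ?q (\<lambda>y. c)"
    proof -
      have "\<bar>measure_pmf.expectation ?q (\<lambda>y. f (S(a:=y,i:=z)) - f (S(a:=y)))\<bar> \<le>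
            measure_pmf.expectation ?q (\<lambda>y. \<bar>f (S(a:=y,i:=z)) - f (S(a:=y))\<bar>)"
        by (rule integral_abs_bound)
      also have "\<dots> \<le> measure_pmf.expectation ?q (\<lambda>y. c)"
      proof (rule E_mono[OF finq])
        fix y assume y: "y \<in> set_pmf ?q"
        show "\<bar>f (S(a:=y,i:=z)) - f (S(a:=y))\<bar> \<le> c"
          by (rule insert.prems(3)[OF suppQ[OF that(1) y] insertI2[OF that(2)] that(3)])
      qed
      finally show ?thesis .
    qed
    finally show ?thesis by simp
  qed
  have IH: "measure_pmf.expectation ?P (\<lambda>S. exp (l * (g S - measure_pmf.expectation ?P g)))
      \<le> exp (l\<^sup>2 * c\<^sup>2 * real (card I) / 2)"
  proof (rule insert.IH)
    show "\<And>i. i \<in> I \<Longrightarrow> finite (set_pmf (p i))" using insert.prems(1) by blast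
    show "l \<ge> 0" by (rule insert.prems(2))
    show "\<And>S i z. S \<in> set_pmf ?P \<Longrightarrow> i \<in> I \<Longrightarrow> z \<in> set_pmf (p i) \<Longrightarrow> \<bar>g (S(i:=z)) - g S\<bar> \<le> c"
      by (rule bdg)
  qed
  have hoef: "measure_pmf.expectation ?q (\<lambda>y. exp (l * (f (S(a:=y)) - g S))) \<le> exp (l\<^sup>2 * c\<^sup>2 / 2)"
    if S: "S \<in> set_pmf ?P" for S
  proof -
    obtain y0 where y0: "y0 \<in> set_pmf ?q" using set_pmf_not_empty by fast
    have "measure_pmf.expectation ?q (\<lambda>y. exp (l * (f (S(a:=y)) - g S)))
       \<le> exp (l\<^sup>2 * ((f (S(a:=y0)) + c) - (f (S(a:=y0)) - c))\<^sup>2 / 8)"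
      unfolding g_def
    proof (rule hoeffding_pmf[OF finq _ insert.prems(2)])
      fix y assume y: "y \<in> set_pmf ?q"
      have "\<bar>f ((S(a:=y0))(a:=y)) - f (S(a:=y0))\<bar> \<le> c"
        using insert.prems(3)[OF suppQ[OF S y0] insertI1 y] by (simp only: fun_upd_upd)
      then show "f (S(a:=y)) \<in> {f (S(a:=y0)) - c..f (S(a:=y0)) + c}" by auto
    qed
    also have "\<dots> = exp (l\<^sup>2 * c\<^sup>2 / 2)" by (simp add: power2_eq_square algebra_simps)
    finally show ?thesis .
  qed
  have "measure_pmf.expectation ?Q (\<lambda>S. exp (l * (f S - measure_pmf.expectation ?Q f)))
     = measure_pmf.expectation ?P (\<lambda>S. measure_pmf.expectation ?q (\<lambda>y. exp (l * (f (S(a:=y)) - g S)))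
           * exp (l * (g S - measure_pmf.expectation ?P g)))"
  proof -
    have "measure_pmf.expectation ?Q (\<lambda>S. exp (l * (f S - measure_pmf.expectation ?Q f)))
      = measure_pmf.expectation ?P (\<lambda>S. measure_pmf.expectation ?q (\<lambda>y. exp (l * (f (S(a:=y)) - measure_pmf.expectation ?P g))))"
      unfolding Ef using insert by (subst E_Pi_insert) auto
    also have "\<dots> = measure_pmf.expectation ?P (\<lambda>S. measure_pmf.expectation ?q (\<lambda>y. exp (l * (f (S(a:=y)) - g S))
           * exp (l * (g S - measure_pmf.expectation ?P g))))"
    proof (intro Bochner_Integration.integral_cong refl)
      fix S y
      have "l * (f (S(a:=y)) - measure_pmf.expectation ?P g) = l * (f (S(a:=y)) - g S) + l * (g S - measure_pmf.expectation ?P g)"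
        by (simp add: right_diff_distrib)
      then show "exp (l * (f (S(a:=y)) - measure_pmf.expectation ?P g)) = exp (l * (f (S(a:=y)) - g S))
           * exp (l * (g S - measure_pmf.expectation ?P g))" by (simp only: exp_add)
    qed
    also have "\<dots> = measure_pmf.expectation ?P (\<lambda>S. measure_pmf.expectation ?q (\<lambda>y. exp (l * (f (S(a:=y)) - g S)))
           * exp (l * (g S - measure_pmf.expectation ?P g)))"
      by (intro Bochner_Integration.integral_cong refl integral_mult_left_zero)
    finally show ?thesis .
  qed
  also have "\<dots> \<le> measure_pmf.expectation ?P (\<lambda>S. exp (l\<^sup>2 * c\<^sup>2 / 2) * exp (l * (g S - measure_pmf.expectation ?P g)))"
    by (rule E_mono[OF finP]) (intro mult_right_mono hoef; simp)
  also have "\<dots> = exp (l\<^sup>2 * c\<^sup>2 / 2) * measure_pmf.expectation ?P (\<lambda>S. exp (l * (g S - measure_pmf.expectation ?P g)))"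
    by (rule integral_mult_right_zero)
  also have "\<dots> \<le> exp (l\<^sup>2 * c\<^sup>2 / 2) * exp (l\<^sup>2 * c\<^sup>2 * real (card I) / 2)"
    by (intro mult_left_mono IH) auto
  also have "\<dots> = exp (l\<^sup>2 * c\<^sup>2 * real (card (insert a I)) / 2)"
  proof -
    have "l\<^sup>2 * c\<^sup>2 / 2 + l\<^sup>2 * c\<^sup>2 * real (card I) / 2 = l\<^sup>2 * c\<^sup>2 * real (card (insert a I)) / 2"
      using insert by (simp add: field_simps)
    then show ?thesis by (simp only: exp_add[symmetric])
  qed
  finally show ?case .
qed




lemma chernoff_pmf:
  fixes f :: "'a \<Rightarrow> real"
  assumes "finite (set_pmf p)" "l > 0"
  shows "measure_pmf.prob p {x. f x \<ge> m + t} \<le> exp (- l * t) * measure_pmf.expectation p (\<lambda>x. exp (l * (f x - m)))"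
proof -
  have "measure_pmf.prob p {x. f x \<ge> m + t} = measure_pmf.expectation p (indicator {x. f x \<ge> m + t})"
    by simp
  also have "\<dots> \<le> measure_pmf.expectation p (\<lambda>x. exp (- l * t) * exp (l * (f x - m)))"
  proof (rule E_mono[OF assms(1)])
    fix x
    have "exp (- l * t) * exp (l * (f x - m)) = exp (l * (f x - m - t))"
      by (simp add: exp_add[symmetric] algebra_simps)
    moreover have "f x \<ge> m + t \<Longrightarrow> 1 \<le> exp (l * (f x - m - t))"
      using assms(2) by simp
    ultimately show "indicator {x. f x \<ge> m + t} x \<le> exp (- l * t) * exp (l * (f x - m))"
      by (auto simp: indicator_def)
  qed
  also have "\<dots> = exp (- l * t) * measure_pmf.expectation p (\<lambda>x. exp (l * (f x - m)))"
    by (rule integral_mult_right_zero)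
  finally show ?thesis .
qed

definition rad :: "real pmf" where "rad = pmf_of_set {-1, 1}"
definition Rad :: "'i set \<Rightarrow> ('i \<Rightarrow> real) pmf" where "Rad I = Pi_pmf I 0 (\<lambda>_. rad)"

lemma set_rad: "set_pmf rad = {-1, 1}"
  unfolding rad_def by simp

lemma finite_rad: "finite (set_pmf rad)"
  by (simp add: set_rad)

lemma E_rad: "measure_pmf.expectation rad (f::real\<Rightarrow>real) = (f (-1) + f 1) / 2"
  unfolding rad_def by (subst integral_pmf_of_set) auto

lemma finite_Rad: "finite I \<Longrightarrow> finite (set_pmf (Rad I))"
  unfolding Rad_def by (intro finite_set_Pi_pmf finite_rad)

lemma bdd_above_absI:
  fixes f :: "'v \<Rightarrow> real"
  assumes "\<And>v. v \<in> V \<Longrightarrow> \<bar>f v\<bar> \<le> B"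
  shows "bdd_above (f ` V)"
  using assms by (intro bdd_aboveI2[of _ _ B]) (auto simp: abs_le_iff)

lemma abs_SUP_le:
  fixes f :: "'v \<Rightarrow> real"
  assumes "V \<noteq> {}" "\<And>v. v \<in> V \<Longrightarrow> \<bar>f v\<bar> \<le> B"
  shows "\<bar>(SUP v\<in>V. f v)\<bar> \<le> B"
proof -
  obtain v0 where v0: "v0 \<in> V" using assms by auto
  have bdd: "bdd_above (f ` V)" by (rule bdd_above_absI) (use assms in auto)
  have "(SUP v\<in>V. f v) \<le> B" by (intro cSUP_least) (use assms in \<open>auto simp: abs_le_iff\<close>)
  moreover have "f v0 \<le> (SUP v\<in>V. f v)" by (intro cSUP_upper v0 bdd)
  moreover have "- B \<le> f v0" using assms(2)[OF v0] by auto
  ultimately show ?thesis by auto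
qed

lemma contraction_step:
  fixes u \<tau> :: "'v \<Rightarrow> real" and \<psi> :: "real \<Rightarrow> real"
  assumes V: "V \<noteq> {}" and u: "\<And>v. v \<in> V \<Longrightarrow> \<bar>u v\<bar> \<le> Mu" and tau: "\<And>v. v \<in> V \<Longrightarrow> \<bar>\<tau> v\<bar> \<le> M"
    and psi: "\<And>x. \<bar>\<psi> x\<bar> \<le> Mp" and lip: "\<And>x y. \<bar>\<psi> x - \<psi> y\<bar> \<le> L * \<bar>x - y\<bar>" and L: "L \<ge> 0"
  shows "measure_pmf.expectation rad (\<lambda>s. SUP v\<in>V. u v + s * \<psi> (\<tau> v))
         \<le> measure_pmf.expectation rad (\<lambda>s. SUP v\<in>V. u v + s * (L * \<tau> v))"
proof -
  have bdA: "bdd_above ((\<lambda>v. u v + L * \<tau> v) ` V)"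
  proof (rule bdd_above_absI)
    fix v assume v: "v \<in> V"
    have "\<bar>L * \<tau> v\<bar> \<le> L * M" using tau[OF v] L by (simp add: abs_mult mult_left_mono)
    then show "\<bar>u v + L * \<tau> v\<bar> \<le> Mu + L * M" using u[OF v] by linarith
  qed
  have bdB: "bdd_above ((\<lambda>v. u v - L * \<tau> v) ` V)"
  proof (rule bdd_above_absI)
    fix v assume v: "v \<in> V"
    have "\<bar>L * \<tau> v\<bar> \<le> L * M" using tau[OF v] L by (simp add: abs_mult mult_left_mono)
    then show "\<bar>u v - L * \<tau> v\<bar> \<le> Mu + L * M" using u[OF v] by linarith
  qed
  define A where "A = (SUP v\<in>V. u v + L * \<tau> v)"
  define B where "B = (SUP v\<in>V. u v - L * \<tau> v)"
  have key: "u v + \<psi> (\<tau> v) + (u w - \<psi> (\<tau> w)) \<le> A + B" if v: "v \<in> V" and w: "w \<in> V" for v w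
  proof (cases "\<tau> w \<le> \<tau> v")
    case True
    have "\<psi> (\<tau> v) - \<psi> (\<tau> w) \<le> L * (\<tau> v - \<tau> w)" using lip[of "\<tau> v" "\<tau> w"] True by auto
    moreover have "u v + L * \<tau> v \<le> A" unfolding A_def by (rule cSUP_upper[OF v bdA])
    moreover have "u w - L * \<tau> w \<le> B" unfolding B_def by (rule cSUP_upper[OF w bdB])
    ultimately show ?thesis by (simp add: algebra_simps)
  next
    case False
    have "\<psi> (\<tau> v) - \<psi> (\<tau> w) \<le> L * (\<tau> w - \<tau> v)" using lip[of "\<tau> v" "\<tau> w"] False by auto
    moreover have "u w + L * \<tau> w \<le> A" unfolding A_def by (rule cSUP_upper[OF w bdA])
    moreover have "u v - L * \<tau> v \<le> B" unfolding B_def by (rule cSUP_upper[OF v bdB])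
    ultimately show ?thesis by (simp add: algebra_simps)
  qed
  have bdP: "bdd_above ((\<lambda>v. u v + \<psi> (\<tau> v)) ` V)"
  proof (rule bdd_above_absI[of _ _ "Mu + Mp"])
    fix v assume "v \<in> V"
    then show "\<bar>u v + \<psi> (\<tau> v)\<bar> \<le> Mu + Mp" using u[of v] psi[of "\<tau> v"] by linarith
  qed
  have "(SUP v\<in>V. u v + \<psi> (\<tau> v)) + (SUP w\<in>V. u w - \<psi> (\<tau> w)) \<le> A + B"
  proof -
    have "(SUP w\<in>V. u w - \<psi> (\<tau> w)) \<le> A + B - (SUP v\<in>V. u v + \<psi> (\<tau> v))"
    proof (rule cSUP_least[OF V])
      fix w assume w: "w \<in> V"
      have "(SUP v\<in>V. u v + \<psi> (\<tau> v)) \<le> A + B - (u w - \<psi> (\<tau> w))"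
      proof (rule cSUP_least[OF V])
        fix v assume "v \<in> V"
        from key[OF this w] show "u v + \<psi> (\<tau> v) \<le> A + B - (u w - \<psi> (\<tau> w))" by linarith
      qed
      then show "u w - \<psi> (\<tau> w) \<le> A + B - (SUP v\<in>V. u v + \<psi> (\<tau> v))" by linarith
    qed
    then show ?thesis by linarith
  qed
  note main = this
  have e1: "(SUP v\<in>V. u v + (-1) * \<psi> (\<tau> v)) = (SUP w\<in>V. u w - \<psi> (\<tau> w))" by simp
  have e2: "(SUP v\<in>V. u v + 1 * \<psi> (\<tau> v)) = (SUP w\<in>V. u w + \<psi> (\<tau> w))" by simp
  have e3: "(SUP v\<in>V. u v + (-1) * (L * \<tau> v)) = B" unfolding B_def by simp
  have e4: "(SUP v\<in>V. u v + 1 * (L * \<tau> v)) = A" unfolding A_def by simp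
  show ?thesis
  proof -
    have m2: "(SUP w\<in>V. u w + \<psi> (\<tau> w)) + (SUP w\<in>V. u w - \<psi> (\<tau> w)) \<le> A + B" by (rule main)
    have "((SUP w\<in>V. u w - \<psi> (\<tau> w)) + (SUP w\<in>V. u w + \<psi> (\<tau> w))) / 2 \<le> (B + A) / 2"
      using m2 by (auto simp: add.commute intro: divide_right_mono)
    then show ?thesis unfolding E_rad e1 e2 e3 e4 .
  qed
qed




lemma set_Rad_insert:
  assumes "finite I" "a \<notin> I" "s \<in> set_pmf rad" "\<sigma> \<in> set_pmf (Rad I)"
  shows "\<sigma>(a:=s) \<in> set_pmf (Rad (insert a I))"
  using assms unfolding Rad_def by (subst set_Pi_pmf_insert) auto

lemma E_Rad_insert:
  fixes f :: "_ \<Rightarrow> real"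
  assumes "finite I" "a \<notin> I"
  shows "measure_pmf.expectation (Rad (insert a I)) f =
         measure_pmf.expectation (Rad I) (\<lambda>\<sigma>. measure_pmf.expectation rad (\<lambda>s. f (\<sigma>(a:=s))))"
  unfolding Rad_def using assms by (subst E_Pi_insert) (auto simp: finite_rad)

lemma contraction:
  fixes u :: "'v \<Rightarrow> real" and \<tau> :: "'v \<Rightarrow> 'i \<Rightarrow> real" and \<psi> :: "real \<Rightarrow> real"
  assumes "finite I"
  shows "V \<noteq> {} \<Longrightarrow> (\<And>v. v \<in> V \<Longrightarrow> \<bar>u v\<bar> \<le> Mu) \<Longrightarrow> (\<And>v i. v \<in> V \<Longrightarrow> i \<in> I \<Longrightarrow> \<bar>\<tau> v i\<bar> \<le> M)
    \<Longrightarrow> (\<And>x. \<bar>\<psi> x\<bar> \<le> Mp) \<Longrightarrow> (\<And>x y. \<bar>\<psi> x - \<psi> y\<bar> \<le> L * \<bar>x - y\<bar>) \<Longrightarrow> L \<ge> 0 \<Longrightarrow>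
    measure_pmf.expectation (Rad I) (\<lambda>\<sigma>. SUP v\<in>V. u v + (\<Sum>i\<in>I. \<sigma> i * \<psi> (\<tau> v i)))
    \<le> measure_pmf.expectation (Rad I) (\<lambda>\<sigma>. SUP v\<in>V. u v + (\<Sum>i\<in>I. \<sigma> i * (L * \<tau> v i)))"
  using assms
proof (induction I arbitrary: u Mu rule: finite_induct)
  case empty
  then show ?case by simp
next
  case (insert a I)
  note V = insert.prems(1) and u = insert.prems(2) and tau = insert.prems(3) and psi = insert.prems(4)
    and lip = insert.prems(5) and L = insert.prems(6)
  have eq1: "u v + (\<Sum>i\<in>insert a I. (\<sigma>(a:=s)) i * h v i) = (u v + (\<Sum>i\<in>I. \<sigma> i * h v i)) + s * h v a"
    for \<sigma> s v and h :: "'v \<Rightarrow> 'i \<Rightarrow> real"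
  proof -
    have "(\<Sum>i\<in>I. (\<sigma>(a:=s)) i * h v i) = (\<Sum>i\<in>I. \<sigma> i * h v i)"
      using insert.hyps by (intro sum.cong) auto
    then show ?thesis using insert.hyps by (simp add: algebra_simps)
  qed
  have eq2: "u v + (\<Sum>i\<in>insert a I. (\<sigma>(a:=s)) i * h v i) = (u v + s * h v a) + (\<Sum>i\<in>I. \<sigma> i * h v i)"
    for \<sigma> s v and h :: "'v \<Rightarrow> 'i \<Rightarrow> real"
    using eq1[of v \<sigma> s h] by (simp add: algebra_simps)
  have finR: "finite (set_pmf (Rad I))" by (rule finite_Rad[OF insert.hyps(1)])
  define LHS where "LHS = measure_pmf.expectation (Rad (insert a I)) (\<lambda>\<sigma>. SUP v\<in>V. u v + (\<Sum>i\<in>insert a I. \<sigma> i * \<psi> (\<tau> v i)))"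
  have "LHS = measure_pmf.expectation (Rad I) (\<lambda>\<sigma>. measure_pmf.expectation rad (\<lambda>s.
        SUP v\<in>V. (u v + (\<Sum>i\<in>I. \<sigma> i * \<psi> (\<tau> v i))) + s * \<psi> (\<tau> v a)))"
    unfolding LHS_def using insert.hyps
    by (subst E_Rad_insert) (simp_all only: eq1[where h = "\<lambda>v i. \<psi> (\<tau> v i)"] not_False_eq_True)
  also have "\<dots> \<le> measure_pmf.expectation (Rad I) (\<lambda>\<sigma>. measure_pmf.expectation rad (\<lambda>s.
        SUP v\<in>V. (u v + (\<Sum>i\<in>I. \<sigma> i * \<psi> (\<tau> v i))) + s * (L * \<tau> v a)))"
  proof (rule E_mono[OF finR])
    fix \<sigma>
    show "measure_pmf.expectation rad (\<lambda>s. SUP v\<in>V. (u v + (\<Sum>i\<in>I. \<sigma> i * \<psi> (\<tau> v i))) + s * \<psi> (\<tau> v a))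
       \<le> measure_pmf.expectation rad (\<lambda>s. SUP v\<in>V. (u v + (\<Sum>i\<in>I. \<sigma> i * \<psi> (\<tau> v i))) + s * (L * \<tau> v a))"
    proof (rule contraction_step[OF V _ _ psi lip L])
      fix v assume v: "v \<in> V"
      show "\<bar>\<tau> v a\<bar> \<le> M" by (rule tau[OF v]) simp
      have "\<bar>\<Sum>i\<in>I. \<sigma> i * \<psi> (\<tau> v i)\<bar> \<le> (\<Sum>i\<in>I. \<bar>\<sigma> i\<bar> * Mp)"
        by (rule order_trans[OF sum_abs]) (auto intro!: sum_mono mult_left_mono psi simp: abs_mult)
      then show "\<bar>u v + (\<Sum>i\<in>I. \<sigma> i * \<psi> (\<tau> v i))\<bar> \<le> Mu + (\<Sum>i\<in>I. \<bar>\<sigma> i\<bar> * Mp)"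
        using u[OF v] by linarith
    qed
  qed
  also have "\<dots> = measure_pmf.expectation rad (\<lambda>s. measure_pmf.expectation (Rad I) (\<lambda>\<sigma>.
        SUP v\<in>V. (u v + s * (L * \<tau> v a)) + (\<Sum>i\<in>I. \<sigma> i * \<psi> (\<tau> v i))))"
    by (subst E_swap[OF finR finite_rad]) (simp add: algebra_simps)
  also have "\<dots> \<le> measure_pmf.expectation rad (\<lambda>s. measure_pmf.expectation (Rad I) (\<lambda>\<sigma>.
        SUP v\<in>V. (u v + s * (L * \<tau> v a)) + (\<Sum>i\<in>I. \<sigma> i * (L * \<tau> v i))))"
  proof (rule E_mono[OF finite_rad])
    fix s assume s: "s \<in> set_pmf rad"
    show "measure_pmf.expectation (Rad I) (\<lambda>\<sigma>. SUP v\<in>V. (u v + s * (L * \<tau> v a)) + (\<Sum>i\<in>I. \<sigma> i * \<psi> (\<tau> v i)))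
      \<le> measure_pmf.expectation (Rad I) (\<lambda>\<sigma>. SUP v\<in>V. (u v + s * (L * \<tau> v a)) + (\<Sum>i\<in>I. \<sigma> i * (L * \<tau> v i)))"
    proof (rule insert.IH[OF V _ _ psi lip L, of _ "Mu + L * M"])
      show "\<And>v i. v \<in> V \<Longrightarrow> i \<in> I \<Longrightarrow> \<bar>\<tau> v i\<bar> \<le> M" using tau by blast
    next
      fix v assume v: "v \<in> V"
      have "\<bar>s\<bar> = 1" using s by (auto simp: set_rad)
      then have "\<bar>s * (L * \<tau> v a)\<bar> \<le> L * M" using tau[OF v, of a] L insertI1[of a I] by (simp add: abs_mult mult_left_mono)
      then show "\<bar>u v + s * (L * \<tau> v a)\<bar> \<le> Mu + L * M" using u[OF v] by linarith
    qed
  qed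
  also have "\<dots> = measure_pmf.expectation (Rad (insert a I)) (\<lambda>\<sigma>. SUP v\<in>V. u v + (\<Sum>i\<in>insert a I. \<sigma> i * (L * \<tau> v i)))"
    using insert.hyps
    by (subst E_Rad_insert, simp_all only: eq2[where h = "\<lambda>v i. L * \<tau> v i"]) (subst E_swap[OF finR finite_rad], rule refl)
  finally show ?case unfolding LHS_def .
qed




lemma E_rad_exp:
  assumes "\<bar>a\<bar> \<le> 1"
  shows "measure_pmf.expectation rad (\<lambda>s. exp (l * (a * s))) \<le> exp (l\<^sup>2 / 2)"
proof -
  have H: "measure_pmf.expectation rad (\<lambda>s. exp (\<bar>l\<bar> * (sgn l * a * s - measure_pmf.expectation rad (\<lambda>s. sgn l * a * s))))
        \<le> exp (\<bar>l\<bar>\<^sup>2 * (1 - (-1))\<^sup>2 / 8)"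
  proof (rule hoeffding_pmf[OF finite_rad])
    fix s assume "s \<in> set_pmf rad"
    then have "\<bar>s\<bar> = 1" by (auto simp: set_rad)
    then have "\<bar>sgn l * a * s\<bar> \<le> 1" using assms by (auto simp: abs_mult abs_sgn_eq)
    then show "sgn l * a * s \<in> {-1..1}" by auto
  qed simp
  have E1: "measure_pmf.expectation rad (\<lambda>s. sgn l * a * s) = 0" by (simp add: E_rad)
  have fn: "\<bar>l\<bar> * (sgn l * a * s - 0) = l * (a * s)" for s
    by (cases "l > 0"; cases "l < 0") auto
  have "measure_pmf.expectation rad (\<lambda>s. exp (l * (a * s)))
     = measure_pmf.expectation rad (\<lambda>s. exp (\<bar>l\<bar> * (sgn l * a * s - measure_pmf.expectation rad (\<lambda>s. sgn l * a * s))))"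
    unfolding E1 fn ..
  also have "\<dots> \<le> exp (\<bar>l\<bar>\<^sup>2 * (1 - (-1))\<^sup>2 / 8)" by (rule H)
  also have "\<dots> = exp (l\<^sup>2 / 2)" by (simp add: power2_eq_square)
  finally show ?thesis .
qed

lemma E_Rad_exp_sum:
  assumes "finite I" "\<And>i. i \<in> I \<Longrightarrow> \<bar>a i\<bar> \<le> 1"
  shows "measure_pmf.expectation (Rad I) (\<lambda>\<sigma>. exp (l * (\<Sum>i\<in>I. a i * \<sigma> i))) \<le> exp (l\<^sup>2 / 2) ^ card I"
proof -
  have "measure_pmf.expectation (Rad I) (\<lambda>\<sigma>. exp (l * (\<Sum>i\<in>I. a i * \<sigma> i)))
      = measure_pmf.expectation (Rad I) (\<lambda>\<sigma>. \<Prod>i\<in>I. exp (l * (a i * \<sigma> i)))"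
    by (simp add: sum_distrib_left exp_sum assms(1))
  also have "\<dots> = (\<Prod>i\<in>I. measure_pmf.expectation rad (\<lambda>s. exp (l * (a i * s))))"
    unfolding Rad_def
    by (rule expectation_prod_Pi_pmf[where f = "\<lambda>i s. exp (l * (a i * s))"]) (auto intro!: integrable_measure_pmf_finite finite_rad assms)
  also have "\<dots> \<le> (\<Prod>i\<in>I. exp (l\<^sup>2 / 2))"
    by (intro prod_mono conjI E_rad_exp assms) (auto intro!: Bochner_Integration.integral_nonneg)
  finally show ?thesis by simp
qed

definition cube :: "nat \<Rightarrow> (nat \<Rightarrow> real) set" where
  "cube d = PiE {..<d} (\<lambda>_. {-1, 1})"

definition Bl1 :: "nat \<Rightarrow> (nat \<Rightarrow> real) set" where
  "Bl1 d = {v. l1norm d v \<le> 1}"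

lemma ln_le_lin: "(z::real) > 0 \<Longrightarrow> m > 0 \<Longrightarrow> ln z \<le> ln m + z / m - 1"
proof -
  assume z: "z > 0" and m: "m > 0"
  have "ln (z / m) \<le> z / m - 1" using z m by (intro ln_le_minus_one divide_pos_pos)
  then show ?thesis using z m by (simp add: ln_div)
qed

lemma massart:
  fixes x :: "'i \<Rightarrow> nat \<Rightarrow> real" and c :: "'i \<Rightarrow> real"
  assumes I: "finite I" "I \<noteq> {}" and d: "d \<ge> 1"
    and x: "\<And>i j. i \<in> I \<Longrightarrow> j < d \<Longrightarrow> \<bar>x i j\<bar> \<le> 1" and c: "\<And>i. i \<in> I \<Longrightarrow> \<bar>c i\<bar> \<le> 1" and L: "L \<ge> 0"
  shows "measure_pmf.expectation (Rad I) (\<lambda>\<sigma>. SUP v\<in>Bl1 d. 0 + (\<Sum>i\<in>I. \<sigma> i * (L * (c i * ip d v (x i)))))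
         \<le> L * sqrt (2 * real (card I) * ln (2 * real d))"
proof -
  define n where "n = real (card I)"
  have n: "n > 0" using I by (simp add: n_def card_gt_0_iff)
  define q where "q = ln (2 * real d)"
  have q: "q > 0" using d by (simp add: q_def)
  define l where "l = sqrt (2 * q / n)"
  have l: "l > 0" using n q by (simp add: l_def)
  define A where "A \<sigma> j = (\<Sum>i\<in>I. (c i * x i j) * \<sigma> i)" for \<sigma> j
  define Z where "Z \<sigma> = (\<Sum>j<d. exp (l * A \<sigma> j) + exp ((-l) * A \<sigma> j))" for \<sigma>
  define Mx where "Mx \<sigma> = ln (Z \<sigma>) / l" for \<sigma>
  have Zpos: "Z \<sigma> > 0" for \<sigma>
  proof -
    have "0 \<in> {..<d}" using d by simp
    then have "{..<d} \<noteq> {}" by blast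
    then show ?thesis unfolding Z_def by (intro sum_pos) (auto intro: add_pos_pos)
  qed
  have Ale: "\<bar>A \<sigma> j\<bar> \<le> Mx \<sigma>" if j: "j < d" for \<sigma> j
  proof -
    have "exp (l * \<bar>A \<sigma> j\<bar>) \<le> exp (l * A \<sigma> j) + exp ((-l) * A \<sigma> j)"
      by (cases "A \<sigma> j \<ge> 0") auto
    also have "\<dots> \<le> Z \<sigma>" unfolding Z_def
      by (rule member_le_sum[where f = "\<lambda>j. exp (l * A \<sigma> j) + exp ((-l) * A \<sigma> j)"]) (use j in \<open>auto intro: add_nonneg_nonneg\<close>)
    finally have "l * \<bar>A \<sigma> j\<bar> \<le> ln (Z \<sigma>)"
      using Zpos by (simp add: ln_ge_iff)
    then show ?thesis unfolding Mx_def using l by (simp add: field_simps)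
  qed
  have Mx0: "Mx \<sigma> \<ge> 0" for \<sigma> using Ale[of 0 \<sigma>] d by auto
  have bound: "(SUP v\<in>Bl1 d. 0 + (\<Sum>i\<in>I. \<sigma> i * (L * (c i * ip d v (x i))))) \<le> L * Mx \<sigma>" for \<sigma>
  proof (rule cSUP_least)
    show "Bl1 d \<noteq> {}" by (auto simp: Bl1_def l1norm_def intro!: exI[of _ "\<lambda>_. 0"])
  next
    fix v assume v: "v \<in> Bl1 d"
    have "0 + (\<Sum>i\<in>I. \<sigma> i * (L * (c i * ip d v (x i)))) = L * (\<Sum>j<d. v j * A \<sigma> j)"
      unfolding A_def ip_def
      by (simp add: sum_distrib_left sum_distrib_right mult_ac) (rule sum.swap)
    also have "\<dots> \<le> L * (\<Sum>j<d. \<bar>v j\<bar> * Mx \<sigma>)"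
    proof (intro mult_left_mono L sum_mono)
      fix j assume "j \<in> {..<d}"
      then have "\<bar>A \<sigma> j\<bar> \<le> Mx \<sigma>" by (intro Ale) auto
      then have "\<bar>v j * A \<sigma> j\<bar> \<le> \<bar>v j\<bar> * Mx \<sigma>" by (simp add: abs_mult mult_left_mono)
      then show "v j * A \<sigma> j \<le> \<bar>v j\<bar> * Mx \<sigma>" by linarith
    qed
    also have "\<dots> = L * (l1norm d v * Mx \<sigma>)" by (simp add: l1norm_def sum_distrib_right)
    also have "\<dots> \<le> L * Mx \<sigma>"
      using v Mx0[of \<sigma>] L mult_right_mono[of "l1norm d v" 1 "Mx \<sigma>"] by (intro mult_left_mono) (auto simp: Bl1_def)
    finally show "0 + (\<Sum>i\<in>I. \<sigma> i * (L * (c i * ip d v (x i)))) \<le> L * Mx \<sigma>" .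
  qed
  have finR: "finite (set_pmf (Rad I))" by (rule finite_Rad[OF I(1)])
  define m where "m = measure_pmf.expectation (Rad I) Z"
  have EZ: "m \<le> 2 * real d * exp (l\<^sup>2 / 2) ^ card I"
  proof -
    have "m = (\<Sum>j<d. measure_pmf.expectation (Rad I) (\<lambda>\<sigma>. exp (l * A \<sigma> j))
                + measure_pmf.expectation (Rad I) (\<lambda>\<sigma>. exp ((-l) * A \<sigma> j)))"
      unfolding m_def Z_def
      by (subst Bochner_Integration.integral_sum) (auto intro!: integrable_measure_pmf_finite finR Bochner_Integration.integral_add sum.cong)
    also have "\<dots> \<le> (\<Sum>j<d. exp (l\<^sup>2 / 2) ^ card I + exp ((-l)\<^sup>2 / 2) ^ card I)"
      unfolding A_def using I x c
      by (intro sum_mono add_mono E_Rad_exp_sum) (auto simp: abs_mult intro: mult_le_one)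
    also have "\<dots> = 2 * real d * exp (l\<^sup>2 / 2) ^ card I" by simp
    finally show ?thesis .
  qed
  have mpos: "m > 0"
  proof -
    have "measure_pmf.expectation (Rad I) (\<lambda>\<sigma>. 0) < m" unfolding m_def
    proof -
      obtain \<sigma>0 where s0: "\<sigma>0 \<in> set_pmf (Rad I)" using set_pmf_not_empty by fast
      have "(\<Sum>a\<in>set_pmf (Rad I). 0 * pmf (Rad I) a) < (\<Sum>a\<in>set_pmf (Rad I). Z a * pmf (Rad I) a)"
        by (rule sum_strict_mono_ex1[OF finR]) (use s0 Zpos in \<open>auto simp: set_pmf_iff less_imp_le intro!: mult_pos_pos mult_nonneg_nonneg\<close>)
      then show "measure_pmf.expectation (Rad I) (\<lambda>\<sigma>. 0) < measure_pmf.expectation (Rad I) Z"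
        by (simp add: E_sum[OF finR])
    qed
    then show ?thesis by simp
  qed
  have "measure_pmf.expectation (Rad I) (\<lambda>\<sigma>. SUP v\<in>Bl1 d. 0 + (\<Sum>i\<in>I. \<sigma> i * (L * (c i * ip d v (x i)))))
        \<le> measure_pmf.expectation (Rad I) (\<lambda>\<sigma>. L / l * ln (Z \<sigma>))"
    by (rule E_mono[OF finR]) (use bound in \<open>simp add: Mx_def\<close>)
  also have "\<dots> \<le> measure_pmf.expectation (Rad I) (\<lambda>\<sigma>. L / l * (ln m + Z \<sigma> / m - 1))"
  proof (rule E_mono[OF finR])
    fix \<sigma>
    have "ln (Z \<sigma>) \<le> ln m + Z \<sigma> / m - 1" by (rule ln_le_lin[OF Zpos mpos])
    moreover have "L / l \<ge> 0" using L l by simp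
    ultimately show "L / l * ln (Z \<sigma>) \<le> L / l * (ln m + Z \<sigma> / m - 1)" by (rule mult_left_mono)
  qed
  also have "\<dots> = L / l * (ln m + m / m - 1)"
    unfolding m_def
    by (simp add: Bochner_Integration.integral_add Bochner_Integration.integral_diff integrable_measure_pmf_finite finR)
  also have "\<dots> = L / l * ln m" using mpos by simp
  also have "\<dots> \<le> L / l * (q + l\<^sup>2 / 2 * n)"
  proof (intro mult_left_mono)
    have "ln m \<le> ln (2 * real d * exp (l\<^sup>2 / 2) ^ card I)" using EZ mpos by simp
    also have "\<dots> = q + l\<^sup>2 / 2 * n" using d by (simp add: ln_mult ln_realpow q_def n_def)
    finally show "ln m \<le> q + l\<^sup>2 / 2 * n" .
  qed (use L l in auto)
  also have "\<dots> = L * sqrt (2 * real (card I) * ln (2 * real d))"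
  proof -
    have l2: "l\<^sup>2 = 2 * q / n" unfolding l_def using n q by simp
    have "q + l\<^sup>2 / 2 * n = l\<^sup>2 * n" using l2 n by (simp add: field_simps)
    then have "L / l * (q + l\<^sup>2 / 2 * n) = L * (l * n)" using l by (simp add: power2_eq_square field_simps)
    also have "l * n = sqrt (2 * n * q)"
    proof -
      have "l * n = sqrt (2 * q / n) * sqrt (n\<^sup>2)" using n unfolding l_def by simp
      also have "\<dots> = sqrt (2 * q / n * n\<^sup>2)" by (simp only: real_sqrt_mult)
      also have "2 * q / n * n\<^sup>2 = 2 * n * q" using n by (simp add: power2_eq_square field_simps)
      finally show ?thesis .
    qed
    finally show ?thesis by (simp add: n_def q_def)
  qed
  finally show ?thesis .
qed




definition phi :: "nat \<Rightarrow> real \<Rightarrow> real" where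
  "phi k t = min 1 (max 0 (1 - real k * t))"

definition loss :: "nat \<Rightarrow> nat \<Rightarrow> (nat \<Rightarrow> real) \<Rightarrow> (nat \<Rightarrow> real) \<Rightarrow> (nat \<Rightarrow> real) \<Rightarrow> real" where
  "loss d k wstar v x = phi k (label d wstar x * ip d v x)"

definition Fsup :: "nat \<Rightarrow> nat \<Rightarrow> nat \<Rightarrow> (nat \<Rightarrow> real) \<Rightarrow> (nat \<Rightarrow> (nat \<Rightarrow> real)) \<Rightarrow> real" where
  "Fsup d k n wstar S = (SUP v\<in>Bl1 d. measure_pmf.expectation (cube_dist d) (loss d k wstar v)
       - (\<Sum>i<n. loss d k wstar v (S i)) / real n)"

lemma phi_01: "0 \<le> phi k t" "phi k t \<le> 1"
  by (auto simp: phi_def)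

lemma phi_lip: "\<bar>phi k x - phi k y\<bar> \<le> real k * \<bar>x - y\<bar>"
proof -
  have "\<bar>max 0 (1 - real k * x) - max 0 (1 - real k * y)\<bar> \<le> \<bar>(1 - real k * x) - (1 - real k * y)\<bar>"
    by (auto simp: max_def)
  then have "\<bar>phi k x - phi k y\<bar> \<le> \<bar>(1 - real k * x) - (1 - real k * y)\<bar>"
    unfolding phi_def by (auto simp: min_def)
  also have "(1 - real k * x) - (1 - real k * y) = real k * (y - x)" by (simp add: algebra_simps)
  also have "\<bar>real k * (y - x)\<bar> = real k * \<bar>x - y\<bar>" by (simp add: abs_mult abs_minus_commute)
  finally show ?thesis .
qed

lemma loss_01: "0 \<le> loss d k wstar v x" "loss d k wstar v x \<le> 1"
  unfolding loss_def by (rule phi_01)+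

lemma cube_dist_eq: "cube_dist d = pmf_of_set (cube d)"
  by (simp add: cube_dist_def cube_def)

lemma finite_cube: "finite (cube d)"
  unfolding cube_def by (intro finite_PiE) auto

lemma cube_ne: "cube d \<noteq> {}"
  unfolding cube_def by (simp add: PiE_eq_empty_iff)

lemma set_cube_dist: "set_pmf (cube_dist d) = cube d"
  unfolding cube_dist_eq using finite_cube cube_ne by simp

lemma finite_cube_dist: "finite (set_pmf (cube_dist d))"
  by (simp add: set_cube_dist finite_cube)

lemma cube_coord: "x \<in> cube d \<Longrightarrow> j < d \<Longrightarrow> x j \<in> {-1, 1}"
  unfolding cube_def by (auto simp: PiE_def Pi_def)

lemma cube_abs: "x \<in> cube d \<Longrightarrow> j < d \<Longrightarrow> \<bar>x j\<bar> \<le> 1"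
  using cube_coord[of x d j] by auto

lemma label_abs: "\<bar>label d wstar x\<bar> \<le> 1"
  unfolding label_def by (auto simp: sgn_real_def)

lemma ip_abs: assumes "x \<in> cube d" shows "\<bar>ip d v x\<bar> \<le> l1norm d v"
proof -
  have "\<bar>ip d v x\<bar> \<le> (\<Sum>i<d. \<bar>v i * x i\<bar>)" unfolding ip_def by (rule sum_abs)
  also have "\<dots> \<le> (\<Sum>i<d. \<bar>v i\<bar>)"
    using cube_abs[OF assms] by (intro sum_mono) (auto simp: abs_mult intro: mult_left_le)
  finally show ?thesis by (simp add: l1norm_def)
qed

lemma set_sample_dist: "S \<in> set_pmf (sample_dist d n) \<Longrightarrow> i < n \<Longrightarrow> S i \<in> cube d"
  unfolding sample_dist_def by (subst (asm) set_Pi_pmf) (auto simp: PiE_dflt_def set_cube_dist)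

lemma finite_sample_dist: "finite (set_pmf (sample_dist d n))"
  unfolding sample_dist_def by (intro finite_set_Pi_pmf finite_cube_dist) auto

lemma odd_sum:
  fixes m :: nat
  assumes "\<And>i. i < m \<Longrightarrow> t i \<in> {-1, 1::real}"
  shows "\<exists>z::int. (\<Sum>i<m. t i) = of_int z \<and> (odd z \<longleftrightarrow> odd m)"
  using assms
proof (induction m)
  case 0 then show ?case by (intro exI[of _ 0]) auto
next
  case (Suc m)
  then obtain z where z: "(\<Sum>i<m. t i) = of_int z" "odd z \<longleftrightarrow> odd m" by auto
  have "t m \<in> {-1, 1}" using Suc.prems by auto
  then show ?case
  proof
    assume "t m = -1"
    then show ?thesis using z by (intro exI[of _ "z - 1"]) auto
  next
    assume "t m \<in> {1}"
    then show ?thesis using z by (intro exI[of _ "z + 1"]) auto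
  qed
qed

context
  fixes d k :: nat and wstar :: "nat \<Rightarrow> real"
  assumes k: "odd k" "0 < k" "k \<le> d" and ws: "\<forall>i<k. wstar i \<in> {-1, 1}" "\<forall>i\<ge>k. wstar i = 0"
begin

lemma ip_wstar_ge1: assumes "x \<in> cube d" shows "\<bar>ip d wstar x\<bar> \<ge> 1"
proof -
  have "ip d wstar x = (\<Sum>i<k. wstar i * x i)"
    unfolding ip_def using k ws by (intro sum.mono_neutral_right) auto
  moreover obtain z :: int where z: "(\<Sum>i<k. wstar i * x i) = of_int z" "odd z \<longleftrightarrow> odd k"
  proof -
    have "wstar i * x i \<in> {-1, 1}" if i: "i < k" for i
    proof -
      have "wstar i \<in> {-1, 1}" using ws i by auto
      moreover have "x i \<in> {-1, 1}" using cube_coord[OF assms] i k by auto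
      ultimately show ?thesis by auto
    qed
    then show ?thesis using odd_sum[of k "\<lambda>i. wstar i * x i"] that by blast
  qed
  ultimately have "ip d wstar x = of_int z" "z \<noteq> 0" using k by auto
  then show ?thesis by linarith
qed

lemma label_ip_wstar: assumes "x \<in> cube d" shows "label d wstar x * ip d wstar x \<ge> 1"
  using ip_wstar_ge1[OF assms] unfolding label_def by (auto simp: sgn_real_def)

lemma l1norm_wstar: "l1norm d wstar = real k"
proof -
  have "l1norm d wstar = (\<Sum>i<k. \<bar>wstar i\<bar>)"
    unfolding l1norm_def using k ws by (intro sum.mono_neutral_right) auto
  also have "\<dots> = (\<Sum>i<k. 1)" using ws by (intro sum.cong) auto
  finally show ?thesis by simp
qed

lemma stepA:
  assumes n: "0 < n" and S: "\<And>i. i < n \<Longrightarrow> S i \<in> cube d" and w: "max_l1_margin d n wstar S w"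
  shows "test_error d wstar w \<le> Fsup d k n wstar S"
proof -
  have fin: "finite ((\<lambda>i. label d wstar (S i) * ip d v (S i) / l1norm d v) ` {..<n})" for v by simp
  have ne: "(\<lambda>i. label d wstar (S i) * ip d v (S i) / l1norm d v) ` {..<n} \<noteq> {}" for v using n by auto
  have "1 / real k \<le> l1_margin d n wstar S wstar"
    unfolding l1_margin_def
  proof -
    have "1 / real k \<le> label d wstar (S i) * ip d wstar (S i) / l1norm d wstar" if "i < n" for i
      using label_ip_wstar[OF S[OF that]] k by (auto simp: l1norm_wstar divide_right_mono)
    then show "1 / real k \<le> Min ((\<lambda>i. label d wstar (S i) * ip d wstar (S i) / l1norm d wstar) ` {..<n})"
      by (subst Min_ge_iff[OF fin ne]) auto
  qed
  also have "\<dots> \<le> l1_margin d n wstar S w"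
    using w k unfolding max_l1_margin_def by (auto simp: l1norm_wstar)
  finally have mw: "1 / real k \<le> l1_margin d n wstar S w" .
  define N where "N = l1norm d w"
  have N: "N > 0" using w by (simp add: max_l1_margin_def N_def)
  define v where "v j = w j / N" for j
  have ipv: "ip d v x = ip d w x / N" for x
    unfolding ip_def v_def by (simp add: sum_divide_distrib)
  have l1v: "l1norm d v = 1"
    unfolding l1norm_def v_def using N by (simp add: sum_divide_distrib[symmetric] N_def l1norm_def)
  then have vB: "v \<in> Bl1 d" by (simp add: Bl1_def)
  have lossS: "loss d k wstar v (S i) = 0" if i: "i < n" for i
  proof -
    have "l1_margin d n wstar S w \<le> label d wstar (S i) * ip d w (S i) / l1norm d w"
      unfolding l1_margin_def using i by (intro Min_le fin) auto
    with mw have "1 / real k \<le> label d wstar (S i) * ip d v (S i)"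
      by (simp add: ipv N_def)
    then have "1 \<le> real k * (label d wstar (S i) * ip d v (S i))"
      using k by (simp add: field_simps)
    then show ?thesis unfolding loss_def phi_def by simp
  qed
  have "test_error d wstar w \<le> measure_pmf.expectation (cube_dist d) (loss d k wstar v)"
    unfolding test_error_def
  proof (rule E_mono[OF finite_cube_dist])
    fix x
    have "label d wstar x * ip d v x = (label d wstar x * ip d w x) / N" by (simp add: ipv)
    then have "label d wstar x * ip d w x \<le> 0 \<Longrightarrow> label d wstar x * ip d v x \<le> 0"
      using N by (simp add: divide_nonpos_pos)
    moreover have "t \<le> 0 \<Longrightarrow> phi k t = 1" for t
    proof -
      assume "t \<le> 0"
      then have "real k * t \<le> 0" by (simp add: mult_nonneg_nonpos)
      then show "phi k t = 1" unfolding phi_def by simp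
    qed
    ultimately show "(if label d wstar x * ip d w x \<le> 0 then 1 else 0) \<le> loss d k wstar v x"
      unfolding loss_def using phi_01 by auto
  qed
  also have "\<dots> = measure_pmf.expectation (cube_dist d) (loss d k wstar v) - (\<Sum>i<n. loss d k wstar v (S i)) / real n"
    using lossS by simp
  also have "\<dots> \<le> Fsup d k n wstar S"
    unfolding Fsup_def
  proof (rule cSUP_upper[OF vB], rule bdd_above_absI)
    fix u
    have "0 \<le> measure_pmf.expectation (cube_dist d) (loss d k wstar u)"
      by (rule Bochner_Integration.integral_nonneg) (simp add: loss_01)
    moreover have "measure_pmf.expectation (cube_dist d) (loss d k wstar u) \<le> 1"
      using E_mono[OF finite_cube_dist, where f = "loss d k wstar u" and g = "\<lambda>_. 1"] loss_01 by simp
    moreover have "0 \<le> (\<Sum>i<n. loss d k wstar u (S i)) / real n"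
      by (intro divide_nonneg_nonneg sum_nonneg) (simp_all add: loss_01)
    moreover have "(\<Sum>i<n. loss d k wstar u (S i)) / real n \<le> 1"
      using sum_mono[of "{..<n}" "\<lambda>i. loss d k wstar u (S i)" "\<lambda>_. 1"] loss_01 n by (simp add: field_simps)
    ultimately show "\<bar>measure_pmf.expectation (cube_dist d) (loss d k wstar u) - (\<Sum>i<n. loss d k wstar u (S i)) / real n\<bar> \<le> 1"
      by linarith
  qed
  finally show ?thesis .
qed

end




definition swp :: "('i \<Rightarrow> real) \<Rightarrow> ('i \<Rightarrow> 'a) \<times> ('i \<Rightarrow> 'a) \<Rightarrow> ('i \<Rightarrow> 'a) \<times> ('i \<Rightarrow> 'a)" where
  "swp \<sigma> ss = ((\<lambda>i. if \<sigma> i = -1 then snd ss i else fst ss i), (\<lambda>i. if \<sigma> i = -1 then fst ss i else snd ss i))"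

lemma swp_swp: "swp \<sigma> (swp \<sigma> ss) = ss"
  by (cases ss) (auto simp: swp_def fun_eq_iff)

lemma inj_swp: "inj (swp \<sigma>)"
  by (metis injI swp_swp)

lemma pmf_pair_Pi:
  assumes "finite I"
  shows "pmf (pair_pmf (Pi_pmf I dflt p) (Pi_pmf I dflt p)) (S, S') =
    (if (\<forall>j. j \<notin> I \<longrightarrow> S j = dflt \<and> S' j = dflt) then (\<Prod>i\<in>I. pmf (p i) (S i) * pmf (p i) (S' i)) else 0)"
  using assms by (auto simp: pmf_pair pmf_Pi prod.distrib)

lemma swap_inv:
  assumes "finite I"
  shows "map_pmf (swp \<sigma>) (pair_pmf (Pi_pmf I dflt p) (Pi_pmf I dflt p)) = pair_pmf (Pi_pmf I dflt p) (Pi_pmf I dflt p)"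
proof (rule pmf_eqI, goal_cases)
  case (1 x)
  let ?M = "pair_pmf (Pi_pmf I dflt p) (Pi_pmf I dflt p)"
  obtain S S' where x: "x = (S, S')" by (cases x)
  have "pmf (map_pmf (swp \<sigma>) ?M) x = pmf (map_pmf (swp \<sigma>) ?M) (swp \<sigma> (swp \<sigma> x))" by (simp add: swp_swp)
  also have "\<dots> = pmf ?M (swp \<sigma> x)" by (rule pmf_map_inj'[OF inj_swp])
  also have "\<dots> = pmf ?M x"
  proof -
    define S1 where "S1 = (\<lambda>i. if \<sigma> i = -1 then S' i else S i)"
    define S1' where "S1' = (\<lambda>i. if \<sigma> i = -1 then S i else S' i)"
    have sx: "swp \<sigma> x = (S1, S1')" unfolding x swp_def S1_def S1'_def by (simp add: fun_eq_iff)
    have c: "(\<forall>j. j \<notin> I \<longrightarrow> S1 j = dflt \<and> S1' j = dflt) \<longleftrightarrow> (\<forall>j. j \<notin> I \<longrightarrow> S j = dflt \<and> S' j = dflt)"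
      by (auto simp: S1_def S1'_def split: if_splits)
    have pr: "(\<Prod>i\<in>I. pmf (p i) (S1 i) * pmf (p i) (S1' i)) = (\<Prod>i\<in>I. pmf (p i) (S i) * pmf (p i) (S' i))"
      by (intro prod.cong refl) (auto simp: S1_def S1'_def)
    show ?thesis unfolding sx unfolding x pmf_pair_Pi[OF assms] c pr ..
  qed
  finally show ?case .
qed




lemma SUP_add_le:
  fixes a b :: "'v \<Rightarrow> real"
  assumes "V \<noteq> {}" "bdd_above (a ` V)" "bdd_above (b ` V)"
  shows "(SUP v\<in>V. a v + b v) \<le> (SUP v\<in>V. a v) + (SUP v\<in>V. b v)"
  by (rule cSUP_least[OF assms(1)]) (intro add_mono cSUP_upper assms; assumption)

lemma set_Rad: "finite I \<Longrightarrow> \<sigma> \<in> set_pmf (Rad I) \<Longrightarrow> i \<in> I \<Longrightarrow> \<sigma> i \<in> {-1, 1}"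
  unfolding Rad_def by (subst (asm) set_Pi_pmf) (auto simp: PiE_dflt_def set_rad)

lemma Bl1_ne: "Bl1 d \<noteq> {}"
  by (auto simp: Bl1_def l1norm_def intro!: exI[of _ "\<lambda>_. 0"])

definition hh where
  "hh d k n wstar v S S' = ((\<Sum>i<n. loss d k wstar v (S' i)) - (\<Sum>i<n. loss d k wstar v (S i))) / real n"

definition GG where
  "GG d k n wstar S S' = (SUP v\<in>Bl1 d. hh d k n wstar v S S')"

lemma sum_loss_bounds: "0 \<le> (\<Sum>i<n. loss d k wstar v (S i))" "(\<Sum>i<n. loss d k wstar v (S i)) \<le> real n"
proof -
  show "0 \<le> (\<Sum>i<n. loss d k wstar v (S i))" by (intro sum_nonneg) (rule loss_01)
  have "(\<Sum>i<n. loss d k wstar v (S i)) \<le> (\<Sum>i<n. 1)" by (intro sum_mono) (rule loss_01)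
  then show "(\<Sum>i<n. loss d k wstar v (S i)) \<le> real n" by simp
qed

lemma hh_abs: "0 < n \<Longrightarrow> \<bar>hh d k n wstar v S S'\<bar> \<le> 1"
proof -
  assume n: "0 < n"
  note b1 = sum_loss_bounds[where n = n and S = S' and d = d and k = k and wstar = wstar and v = v] and b2 = sum_loss_bounds[where n = n and S = S and d = d and k = k and wstar = wstar and v = v]
  have "\<bar>(\<Sum>i<n. loss d k wstar v (S' i)) - (\<Sum>i<n. loss d k wstar v (S i))\<bar> \<le> real n"
    using b1 b2 by linarith
  then have "\<bar>(\<Sum>i<n. loss d k wstar v (S' i)) - (\<Sum>i<n. loss d k wstar v (S i))\<bar> / real n \<le> 1"
    using n by (simp add: divide_le_eq)
  then show ?thesis unfolding hh_def by (simp add: abs_divide)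
qed

lemma bdd_hh: "0 < n \<Longrightarrow> bdd_above ((\<lambda>v. hh d k n wstar v S S') ` V)"
  by (rule bdd_above_absI[of _ _ 1]) (rule hh_abs)

context
  fixes d k n :: nat and wstar :: "nat \<Rightarrow> real"
  assumes n: "0 < n" and d: "1 \<le> d"
begin

lemma Ex_loss:
  "measure_pmf.expectation (cube_dist d) (loss d k wstar v) =
   measure_pmf.expectation (sample_dist d n) (\<lambda>S'. (\<Sum>i<n. loss d k wstar v (S' i)) / real n)"
proof -
  have c: "measure_pmf.expectation (sample_dist d n) (\<lambda>S'. loss d k wstar v (S' i)) =
           measure_pmf.expectation (cube_dist d) (loss d k wstar v)" if i: "i < n" for i
  proof -
    have "measure_pmf.expectation (sample_dist d n) (\<lambda>S'. loss d k wstar v (S' i)) =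
          measure_pmf.expectation (map_pmf (\<lambda>S. S i) (sample_dist d n)) (loss d k wstar v)"
      by simp
    also have "map_pmf (\<lambda>S. S i) (sample_dist d n) = cube_dist d"
      unfolding sample_dist_def using i by (subst Pi_pmf_component) auto
    finally show ?thesis .
  qed
  have "measure_pmf.expectation (sample_dist d n) (\<lambda>S'. (\<Sum>i<n. loss d k wstar v (S' i)) / real n)
      = (\<Sum>i<n. measure_pmf.expectation (sample_dist d n) (\<lambda>S'. loss d k wstar v (S' i))) / real n"
    by (subst Bochner_Integration.integral_sum[symmetric])
       (auto intro!: integrable_measure_pmf_finite finite_sample_dist)
  also have "\<dots> = (\<Sum>i<n. measure_pmf.expectation (cube_dist d) (loss d k wstar v)) / real n"
    using c by simp
  also have "\<dots> = measure_pmf.expectation (cube_dist d) (loss d k wstar v)" using n by simp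
  finally show ?thesis by simp
qed

lemma F_le_G:
  "Fsup d k n wstar S \<le> measure_pmf.expectation (sample_dist d n) (\<lambda>S'. GG d k n wstar S S')"
  unfolding Fsup_def
proof (rule cSUP_least[OF Bl1_ne])
  fix v assume v: "v \<in> Bl1 d"
  have "measure_pmf.expectation (cube_dist d) (loss d k wstar v) - (\<Sum>i<n. loss d k wstar v (S i)) / real n
      = measure_pmf.expectation (sample_dist d n) (\<lambda>S'. hh d k n wstar v S S')"
    unfolding Ex_loss hh_def diff_divide_distrib
    by (subst Bochner_Integration.integral_diff) (auto intro!: integrable_measure_pmf_finite finite_sample_dist)
  also have "\<dots> \<le> measure_pmf.expectation (sample_dist d n) (\<lambda>S'. GG d k n wstar S S')"
    unfolding GG_def by (rule E_mono[OF finite_sample_dist]) (rule cSUP_upper[OF v bdd_hh[OF n]])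
  finally show "measure_pmf.expectation (cube_dist d) (loss d k wstar v) - (\<Sum>i<n. loss d k wstar v (S i)) / real n
      \<le> measure_pmf.expectation (sample_dist d n) (\<lambda>S'. GG d k n wstar S S')" .
qed

lemma pointwise_bound:
  assumes S: "\<And>i. i < n \<Longrightarrow> S i \<in> cube d" and S': "\<And>i. i < n \<Longrightarrow> S' i \<in> cube d"
  shows "measure_pmf.expectation (Rad {..<n}) (\<lambda>\<sigma>. GG d k n wstar (fst (swp \<sigma> (S, S'))) (snd (swp \<sigma> (S, S'))))
         \<le> 2 * (real k * sqrt (2 * ln (2 * real d) / real n))"
proof -
  define \<tau>1 where "\<tau>1 v i = label d wstar (S' i) * ip d v (S' i)" for v i
  define \<tau>2 where "\<tau>2 v i = label d wstar (S i) * ip d v (S i)" for v i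
  define \<psi>1 where "\<psi>1 t = phi k t / real n" for t
  define \<psi>2 where "\<psi>2 t = - (phi k t / real n)" for t
  define a where "a \<sigma> v = 0 + (\<Sum>i\<in>{..<n}. \<sigma> i * \<psi>1 (\<tau>1 v i))" for \<sigma> v
  define b where "b \<sigma> v = 0 + (\<Sum>i\<in>{..<n}. \<sigma> i * \<psi>2 (\<tau>2 v i))" for \<sigma> v
  have finR: "finite (set_pmf (Rad {..<n}))" by (rule finite_Rad) simp
  have tau_abs: "\<bar>\<tau>1 v i\<bar> \<le> 1" "\<bar>\<tau>2 v i\<bar> \<le> 1" if v: "v \<in> Bl1 d" and i: "i < n" for v i
  proof -
    have "\<bar>label d wstar x * ip d v x\<bar> \<le> 1" if x: "x \<in> cube d" for x
    proof -
      have "\<bar>label d wstar x * ip d v x\<bar> = \<bar>label d wstar x\<bar> * \<bar>ip d v x\<bar>" by (simp add: abs_mult)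
      also have "\<dots> \<le> 1 * 1"
        using label_abs ip_abs[OF x, of v] v by (intro mult_mono) (auto simp: Bl1_def)
      finally show ?thesis by simp
    qed
    then show "\<bar>\<tau>1 v i\<bar> \<le> 1" "\<bar>\<tau>2 v i\<bar> \<le> 1" unfolding \<tau>1_def \<tau>2_def using S S' i by auto
  qed
  have psi_abs: "\<bar>\<psi>1 t\<bar> \<le> 1" "\<bar>\<psi>2 t\<bar> \<le> 1" for t
    unfolding \<psi>1_def \<psi>2_def using phi_01[of k t] n by (auto simp: field_simps)
  have psi_lip: "\<bar>\<psi>1 x - \<psi>1 y\<bar> \<le> real k / real n * \<bar>x - y\<bar>" "\<bar>\<psi>2 x - \<psi>2 y\<bar> \<le> real k / real n * \<bar>x - y\<bar>" for x y
  proof -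
    have "\<bar>\<psi>1 x - \<psi>1 y\<bar> = \<bar>phi k x - phi k y\<bar> / real n" unfolding \<psi>1_def
      by (simp add: diff_divide_distrib[symmetric])
    also have "\<dots> \<le> real k * \<bar>x - y\<bar> / real n" using n by (intro divide_right_mono phi_lip) auto
    finally show "\<bar>\<psi>1 x - \<psi>1 y\<bar> \<le> real k / real n * \<bar>x - y\<bar>" by simp
    have "\<bar>\<psi>2 x - \<psi>2 y\<bar> = \<bar>\<psi>1 x - \<psi>1 y\<bar>" unfolding \<psi>1_def \<psi>2_def by (simp add: abs_minus_commute)
    with \<open>\<bar>\<psi>1 x - \<psi>1 y\<bar> \<le> real k / real n * \<bar>x - y\<bar>\<close>
    show "\<bar>\<psi>2 x - \<psi>2 y\<bar> \<le> real k / real n * \<bar>x - y\<bar>" by simp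
  qed
  have bdd_a: "bdd_above (a \<sigma> ` Bl1 d)" for \<sigma>
  proof (rule bdd_above_absI[of _ _ "\<Sum>i<n. \<bar>\<sigma> i\<bar>"])
    fix v
    have "\<bar>a \<sigma> v\<bar> \<le> (\<Sum>i<n. \<bar>\<sigma> i * \<psi>1 (\<tau>1 v i)\<bar>)" unfolding a_def by (simp add: sum_abs)
    also have "\<dots> \<le> (\<Sum>i<n. \<bar>\<sigma> i\<bar>)"
      using psi_abs by (intro sum_mono) (auto simp: abs_mult intro: mult_left_le)
    finally show "\<bar>a \<sigma> v\<bar> \<le> (\<Sum>i<n. \<bar>\<sigma> i\<bar>)" .
  qed
  have bdd_b: "bdd_above (b \<sigma> ` Bl1 d)" for \<sigma>
  proof (rule bdd_above_absI[of _ _ "\<Sum>i<n. \<bar>\<sigma> i\<bar>"])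
    fix v
    have "\<bar>b \<sigma> v\<bar> \<le> (\<Sum>i<n. \<bar>\<sigma> i * \<psi>2 (\<tau>2 v i)\<bar>)" unfolding b_def by (simp add: sum_abs)
    also have "\<dots> \<le> (\<Sum>i<n. \<bar>\<sigma> i\<bar>)"
      using psi_abs by (intro sum_mono) (auto simp: abs_mult intro: mult_left_le)
    finally show "\<bar>b \<sigma> v\<bar> \<le> (\<Sum>i<n. \<bar>\<sigma> i\<bar>)" .
  qed
  have split: "GG d k n wstar (fst (swp \<sigma> (S, S'))) (snd (swp \<sigma> (S, S'))) \<le> (SUP v\<in>Bl1 d. a \<sigma> v) + (SUP v\<in>Bl1 d. b \<sigma> v)"
    if \<sigma>: "\<sigma> \<in> set_pmf (Rad {..<n})" for \<sigma>
  proof -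
    have "hh d k n wstar v (fst (swp \<sigma> (S, S'))) (snd (swp \<sigma> (S, S'))) = a \<sigma> v + b \<sigma> v" for v
    proof -
      have "(\<Sum>i<n. loss d k wstar v (snd (swp \<sigma> (S, S')) i)) - (\<Sum>i<n. loss d k wstar v (fst (swp \<sigma> (S, S')) i))
          = (\<Sum>i<n. \<sigma> i * loss d k wstar v (S' i) + (- \<sigma> i) * loss d k wstar v (S i))"
        unfolding sum_subtractf[symmetric]
      proof (intro sum.cong refl)
        fix i assume "i \<in> {..<n}"
        then have "\<sigma> i \<in> {-1, 1}" using set_Rad[OF _ \<sigma>] by auto
        then show "loss d k wstar v (snd (swp \<sigma> (S, S')) i) - loss d k wstar v (fst (swp \<sigma> (S, S')) i)
            = \<sigma> i * loss d k wstar v (S' i) + (- \<sigma> i) * loss d k wstar v (S i)"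
          by (auto simp: swp_def)
      qed
      then show ?thesis
        unfolding hh_def a_def b_def \<psi>1_def \<psi>2_def \<tau>1_def \<tau>2_def loss_def
        by (simp add: sum_subtractf diff_divide_distrib sum_negf sum_divide_distrib[symmetric])
    qed
    then have "GG d k n wstar (fst (swp \<sigma> (S, S'))) (snd (swp \<sigma> (S, S'))) = (SUP v\<in>Bl1 d. a \<sigma> v + b \<sigma> v)"
      unfolding GG_def by simp
    also have "\<dots> \<le> (SUP v\<in>Bl1 d. a \<sigma> v) + (SUP v\<in>Bl1 d. b \<sigma> v)"
      by (rule SUP_add_le[OF Bl1_ne bdd_a bdd_b])
    finally show ?thesis .
  qed
  have massart_bd: "measure_pmf.expectation (Rad {..<n}) (\<lambda>\<sigma>. SUP v\<in>Bl1 d. 0 + (\<Sum>i\<in>{..<n}. \<sigma> i * (real k / real n * (label d wstar (x i) * ip d v (x i)))))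
      \<le> real k * sqrt (2 * ln (2 * real d) / real n)" if x: "\<And>i. i < n \<Longrightarrow> x i \<in> cube d" for x
  proof -
    have "measure_pmf.expectation (Rad {..<n}) (\<lambda>\<sigma>. SUP v\<in>Bl1 d. 0 + (\<Sum>i\<in>{..<n}. \<sigma> i * (real k / real n * (label d wstar (x i) * ip d v (x i)))))
       \<le> real k / real n * sqrt (2 * real (card {..<n}) * ln (2 * real d))"
      by (rule massart) (use n d x cube_abs label_abs in auto)
    also have "\<dots> = real k * sqrt (2 * ln (2 * real d) / real n)"
    proof -
      have "sqrt (2 * real n * ln (2 * real d)) = sqrt ((2 * ln (2 * real d) / real n) * (real n)\<^sup>2)"
        using n by (simp add: power2_eq_square field_simps)
      also have "\<dots> = sqrt (2 * ln (2 * real d) / real n) * real n" unfolding real_sqrt_mult real_sqrt_abs by simp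
      finally show ?thesis using n by simp
    qed
    finally show ?thesis .
  qed
  have Ea: "measure_pmf.expectation (Rad {..<n}) (\<lambda>\<sigma>. SUP v\<in>Bl1 d. a \<sigma> v) \<le> real k * sqrt (2 * ln (2 * real d) / real n)"
  proof -
    have "measure_pmf.expectation (Rad {..<n}) (\<lambda>\<sigma>. SUP v\<in>Bl1 d. a \<sigma> v)
       \<le> measure_pmf.expectation (Rad {..<n}) (\<lambda>\<sigma>. SUP v\<in>Bl1 d. 0 + (\<Sum>i\<in>{..<n}. \<sigma> i * (real k / real n * \<tau>1 v i)))"
      unfolding a_def
      by (rule contraction[where u = "\<lambda>_. 0" and Mu = 0 and M = 1 and Mp = 1])
         (use Bl1_ne tau_abs psi_abs psi_lip in auto)
    also have "\<dots> \<le> real k * sqrt (2 * ln (2 * real d) / real n)"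
      unfolding \<tau>1_def by (rule massart_bd[OF S'])
    finally show ?thesis .
  qed
  have Eb: "measure_pmf.expectation (Rad {..<n}) (\<lambda>\<sigma>. SUP v\<in>Bl1 d. b \<sigma> v) \<le> real k * sqrt (2 * ln (2 * real d) / real n)"
  proof -
    have "measure_pmf.expectation (Rad {..<n}) (\<lambda>\<sigma>. SUP v\<in>Bl1 d. b \<sigma> v)
       \<le> measure_pmf.expectation (Rad {..<n}) (\<lambda>\<sigma>. SUP v\<in>Bl1 d. 0 + (\<Sum>i\<in>{..<n}. \<sigma> i * (real k / real n * \<tau>2 v i)))"
      unfolding b_def
      by (rule contraction[where u = "\<lambda>_. 0" and Mu = 0 and M = 1 and Mp = 1])
         (use Bl1_ne tau_abs psi_abs psi_lip in auto)
    also have "\<dots> \<le> real k * sqrt (2 * ln (2 * real d) / real n)"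
      unfolding \<tau>2_def by (rule massart_bd[OF S])
    finally show ?thesis .
  qed
  have "measure_pmf.expectation (Rad {..<n}) (\<lambda>\<sigma>. GG d k n wstar (fst (swp \<sigma> (S, S'))) (snd (swp \<sigma> (S, S'))))
     \<le> measure_pmf.expectation (Rad {..<n}) (\<lambda>\<sigma>. (SUP v\<in>Bl1 d. a \<sigma> v) + (SUP v\<in>Bl1 d. b \<sigma> v))"
    by (rule E_mono[OF finR split])
  also have "\<dots> = measure_pmf.expectation (Rad {..<n}) (\<lambda>\<sigma>. SUP v\<in>Bl1 d. a \<sigma> v)
                + measure_pmf.expectation (Rad {..<n}) (\<lambda>\<sigma>. SUP v\<in>Bl1 d. b \<sigma> v)"
    by (rule Bochner_Integration.integral_add) (auto intro!: integrable_measure_pmf_finite finR)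
  also have "\<dots> \<le> 2 * (real k * sqrt (2 * ln (2 * real d) / real n))"
    using Ea Eb by linarith
  finally show ?thesis .
qed

end




lemma SUP_diff_abs:
  fixes f g :: "'v \<Rightarrow> real"
  assumes V: "V \<noteq> {}" and bf: "bdd_above (f ` V)" and bg: "bdd_above (g ` V)"
    and fg: "\<And>v. v \<in> V \<Longrightarrow> \<bar>f v - g v\<bar> \<le> c"
  shows "\<bar>(SUP v\<in>V. f v) - (SUP v\<in>V. g v)\<bar> \<le> c"
proof -
  have "(SUP v\<in>V. f v) \<le> (SUP v\<in>V. g v) + c"
  proof (rule cSUP_least[OF V])
    fix v assume v: "v \<in> V"
    have "g v \<le> (SUP v\<in>V. g v)" by (rule cSUP_upper[OF v bg])
    then show "f v \<le> (SUP v\<in>V. g v) + c" using fg[OF v] by linarith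
  qed
  moreover have "(SUP v\<in>V. g v) \<le> (SUP v\<in>V. f v) + c"
  proof (rule cSUP_least[OF V])
    fix v assume v: "v \<in> V"
    have "f v \<le> (SUP v\<in>V. f v)" by (rule cSUP_upper[OF v bf])
    then show "g v \<le> (SUP v\<in>V. f v) + c" using fg[OF v] by linarith
  qed
  ultimately show ?thesis by linarith
qed

lemma Fterm_abs:
  assumes "0 < n"
  shows "\<bar>measure_pmf.expectation (cube_dist d) (loss d k wstar u) - (\<Sum>i<n. loss d k wstar u (S i)) / real n\<bar> \<le> 1"
proof -
  have "0 \<le> measure_pmf.expectation (cube_dist d) (loss d k wstar u)"
    by (rule Bochner_Integration.integral_nonneg) (simp add: loss_01)
  moreover have "measure_pmf.expectation (cube_dist d) (loss d k wstar u) \<le> 1"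
    using E_mono[OF finite_cube_dist, where f = "loss d k wstar u" and g = "\<lambda>_. 1"] loss_01 by simp
  moreover note b = sum_loss_bounds[where n = n and S = S and d = d and k = k and wstar = wstar and v = u]
  then have "0 \<le> (\<Sum>i<n. loss d k wstar u (S i)) / real n" by simp
  moreover have "(\<Sum>i<n. loss d k wstar u (S i)) / real n \<le> 1"
    using b assms by (simp add: divide_le_eq)
  ultimately show ?thesis by linarith
qed

lemma Fsup_bdd:
  assumes "0 < n"
  shows "bdd_above ((\<lambda>v. measure_pmf.expectation (cube_dist d) (loss d k wstar v) - (\<Sum>i<n. loss d k wstar v (S i)) / real n) ` V)"
  by (rule bdd_above_absI[of _ _ 1]) (rule Fterm_abs[OF assms])

lemma sum_upd_diff:
  fixes f :: "'a \<Rightarrow> real" and n i :: nat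
  assumes "i < n"
  shows "(\<Sum>j<n. f ((S(i:=z)) j)) - (\<Sum>j<n. f (S j)) = f z - f (S i)"
proof -
  have "(\<Sum>j<n. f ((S(i:=z)) j)) = f z + (\<Sum>j\<in>{..<n} - {i}. f ((S(i:=z)) j))"
    using assms by (subst sum.remove[of _ i]) auto
  moreover have "(\<Sum>j<n. f (S j)) = f (S i) + (\<Sum>j\<in>{..<n} - {i}. f (S j))"
    using assms by (subst sum.remove[of _ i]) auto
  moreover have "(\<Sum>j\<in>{..<n} - {i}. f ((S(i:=z)) j)) = (\<Sum>j\<in>{..<n} - {i}. f (S j))"
    by (intro sum.cong) auto
  ultimately show ?thesis by simp
qed

lemma Fsup_bdd_diff:
  assumes n: "0 < n" and i: "i < n"
  shows "\<bar>Fsup d k n wstar (S(i:=z)) - Fsup d k n wstar S\<bar> \<le> 1 / real n"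
  unfolding Fsup_def
proof (rule SUP_diff_abs[OF Bl1_ne Fsup_bdd[OF n] Fsup_bdd[OF n]])
  fix v
  have "(\<Sum>j<n. loss d k wstar v ((S(i:=z)) j)) - (\<Sum>j<n. loss d k wstar v (S j)) = loss d k wstar v z - loss d k wstar v (S i)"
    by (rule sum_upd_diff[OF i, where f = "loss d k wstar v"])
  moreover have "\<bar>loss d k wstar v z - loss d k wstar v (S i)\<bar> \<le> 1"
    using loss_01[of d k wstar v z] loss_01[of d k wstar v "S i"] by linarith
  ultimately have "\<bar>(\<Sum>j<n. loss d k wstar v ((S(i:=z)) j)) - (\<Sum>j<n. loss d k wstar v (S j))\<bar> / real n \<le> 1 / real n"
    using n by (intro divide_right_mono) auto
  then show "\<bar>measure_pmf.expectation (cube_dist d) (loss d k wstar v) - (\<Sum>j<n. loss d k wstar v ((S(i:=z)) j)) / real n -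
          (measure_pmf.expectation (cube_dist d) (loss d k wstar v) - (\<Sum>j<n. loss d k wstar v (S j)) / real n)\<bar> \<le> 1 / real n"
    by (simp add: abs_minus_commute diff_divide_distrib[symmetric] abs_divide)
qed

context
  fixes d k n :: nat and wstar :: "nat \<Rightarrow> real"
  assumes n: "0 < n" and d: "1 \<le> d"
begin

lemma EF_bound:
  "measure_pmf.expectation (sample_dist d n) (Fsup d k n wstar) \<le> 2 * (real k * sqrt (2 * ln (2 * real d) / real n))"
proof -
  let ?P = "sample_dist d n"
  let ?D = "pair_pmf ?P ?P"
  define Gf where "Gf ss = GG d k n wstar (fst ss) (snd ss)" for ss
  have finP: "finite (set_pmf ?P)" by (rule finite_sample_dist)
  have finD: "finite (set_pmf ?D)" using finP by simp
  have finR: "finite (set_pmf (Rad {..<n}))" by (rule finite_Rad) simp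
  have "measure_pmf.expectation ?P (Fsup d k n wstar) \<le> measure_pmf.expectation ?P (\<lambda>S. measure_pmf.expectation ?P (\<lambda>S'. GG d k n wstar S S'))"
    by (rule E_mono[OF finP]) (rule F_le_G[OF n d])
  also have "\<dots> = measure_pmf.expectation ?D Gf"
    unfolding Gf_def by (subst E_pair[OF finP finP]) simp
  also have "\<dots> = measure_pmf.expectation (Rad {..<n}) (\<lambda>\<sigma>. measure_pmf.expectation ?D Gf)"
    by simp
  also have "\<dots> = measure_pmf.expectation (Rad {..<n}) (\<lambda>\<sigma>. measure_pmf.expectation ?D (\<lambda>ss. Gf (swp \<sigma> ss)))"
  proof -
    have inv: "measure_pmf.expectation ?D Gf = measure_pmf.expectation ?D (\<lambda>ss. Gf (swp \<sigma> ss))" for \<sigma> :: "nat \<Rightarrow> real"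
    proof -
      have "measure_pmf.expectation ?D Gf = measure_pmf.expectation (map_pmf (swp \<sigma>) ?D) Gf"
        unfolding sample_dist_def by (subst swap_inv) auto
      also have "\<dots> = measure_pmf.expectation ?D (\<lambda>ss. Gf (swp \<sigma> ss))" by simp
      finally show ?thesis .
    qed
    show ?thesis by (rule Bochner_Integration.integral_cong[OF refl inv])
  qed
  also have "\<dots> = measure_pmf.expectation ?D (\<lambda>ss. measure_pmf.expectation (Rad {..<n}) (\<lambda>\<sigma>. Gf (swp \<sigma> ss)))"
    by (rule E_swap[OF finR finD])
  also have "\<dots> \<le> measure_pmf.expectation ?D (\<lambda>ss. 2 * (real k * sqrt (2 * ln (2 * real d) / real n)))"
  proof (rule E_mono[OF finD])
    fix ss assume ss: "ss \<in> set_pmf ?D"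
    obtain S S' where ssd: "ss = (S, S')" by (cases ss)
    have S: "S \<in> set_pmf ?P" and S': "S' \<in> set_pmf ?P" using ss ssd by auto
    show "measure_pmf.expectation (Rad {..<n}) (\<lambda>\<sigma>. Gf (swp \<sigma> ss)) \<le> 2 * (real k * sqrt (2 * ln (2 * real d) / real n))"
      unfolding Gf_def ssd
      by (rule pointwise_bound[OF n d]) (use set_sample_dist[OF S] set_sample_dist[OF S'] in auto)
  qed
  also have "\<dots> = 2 * (real k * sqrt (2 * ln (2 * real d) / real n))" by simp
  finally show ?thesis .
qed

end




theorem theoremE3:
  fixes d k n :: nat and \<delta> :: real and wstar :: "nat \<Rightarrow> real"
  assumes "0 < \<delta>" "\<delta> < 1"
    and "odd k" "0 < k" "k \<le> d" "0 < n"
    and "\<forall>i<k. wstar i \<in> {-1, 1}" "\<forall>i\<ge>k. wstar i = 0"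
  shows "measure_pmf.prob (sample_dist d n)
           {S. \<forall>w. max_l1_margin d n wstar S w \<longrightarrow>
                  test_error d wstar w
                    \<le> 4 * real k * sqrt (2 * ln (2 * real d) / real n)
                       + 3 * sqrt (ln (2 / \<delta>) / (2 * real n))}
         \<ge> 1 - \<delta>"
proof -
  note dl = assms(1,2) and kk = assms(3,4,5) and n = assms(6) and ws = assms(7,8)
  have d1: "1 \<le> d" using kk by linarith
  let ?P = "sample_dist d n"
  define F where "F = Fsup d k n wstar"
  define EF where "EF = measure_pmf.expectation ?P F"
  define bnd where "bnd = 4 * real k * sqrt (2 * ln (2 * real d) / real n) + 3 * sqrt (ln (2 / \<delta>) / (2 * real n))"
  define Good where "Good = {S. \<forall>w. max_l1_margin d n wstar S w \<longrightarrow> test_error d wstar w \<le> bnd}"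
  define t where "t = sqrt (2 * ln (1 / \<delta>) / real n)"
  define l where "l = real n * t"
  have lnd: "ln (1 / \<delta>) > 0" using dl by simp
  have t: "t > 0" using lnd n by (simp add: t_def)
  have l: "l > 0" using t n by (simp add: l_def)
  have t2: "t\<^sup>2 = 2 * ln (1 / \<delta>) / real n" unfolding t_def using lnd n by simp
  have finP: "finite (set_pmf ?P)" by (rule finite_sample_dist)
  have mgf: "measure_pmf.expectation ?P (\<lambda>S. exp (l * (F S - EF))) \<le> exp (l\<^sup>2 * (1 / real n)\<^sup>2 * real (card {..<n}) / 2)"
    unfolding EF_def sample_dist_def
  proof (rule mcdiarmid_mgf)
    show "finite {..<n}" by simp
    show "\<And>i. i \<in> {..<n} \<Longrightarrow> finite (set_pmf (cube_dist d))" by (rule finite_cube_dist)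
    show "0 \<le> l" using l by simp
    show "\<bar>F (S(i := z)) - F S\<bar> \<le> 1 / real n" if "i \<in> {..<n}" for S i z
      unfolding F_def using that n by (intro Fsup_bdd_diff) auto
  qed
  have ex: "l\<^sup>2 * (1 / real n)\<^sup>2 * real (card {..<n}) / 2 = ln (1 / \<delta>)"
    unfolding l_def using n t2 by (simp add: power2_eq_square field_simps)
  have lt: "l * t = 2 * ln (1 / \<delta>)"
    unfolding l_def using n t2 by (simp add: power2_eq_square field_simps)
  have tail: "measure_pmf.prob ?P {S. F S \<ge> EF + t} \<le> \<delta>"
  proof -
    have "measure_pmf.prob ?P {S. F S \<ge> EF + t} \<le> exp (- l * t) * measure_pmf.expectation ?P (\<lambda>S. exp (l * (F S - EF)))"
      by (rule chernoff_pmf[OF finP l])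
    also have "\<dots> \<le> exp (- l * t) * exp (ln (1 / \<delta>))"
      using mgf unfolding ex by (intro mult_left_mono) auto
    also have "\<dots> = exp (- ln (1 / \<delta>))" using lt by (simp add: exp_add[symmetric])
    also have "\<dots> = \<delta>" using dl by (simp add: ln_div)
    finally show ?thesis .
  qed
  have EFb: "EF \<le> 2 * (real k * sqrt (2 * ln (2 * real d) / real n))"
    unfolding EF_def F_def by (rule EF_bound[OF n d1])
  have "EF + t \<le> bnd"
  proof -
    have "2 * (real k * sqrt (2 * ln (2 * real d) / real n)) \<le> 4 * real k * sqrt (2 * ln (2 * real d) / real n)"
    proof -
      have "0 \<le> ln (2 * real d)" using d1 by simp
      then have "0 \<le> real k * sqrt (2 * ln (2 * real d) / real n)" by simp
      then show ?thesis by simp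
    qed
    moreover have "t \<le> 3 * sqrt (ln (2 / \<delta>) / (2 * real n))"
    proof -
      have "2 * ln (1 / \<delta>) / real n = 4 * (ln (1 / \<delta>) / (2 * real n))" using n by (simp add: field_simps)
      then have "t = sqrt (4 * (ln (1 / \<delta>) / (2 * real n)))" unfolding t_def by (simp only:)
      also have "\<dots> = 2 * sqrt (ln (1 / \<delta>) / (2 * real n))"
      proof -
        have sq4: "sqrt 4 = (2::real)" by (rule real_sqrt_unique) auto
        show ?thesis unfolding real_sqrt_mult sq4 ..
      qed
      also have "\<dots> \<le> 3 * sqrt (ln (2 / \<delta>) / (2 * real n))"
      proof -
        have "ln (1 / \<delta>) \<le> ln (2 / \<delta>)" using dl by (simp add: divide_right_mono)
        then have "ln (1 / \<delta>) / (2 * real n) \<le> ln (2 / \<delta>) / (2 * real n)"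
          using n by (intro divide_right_mono) auto
        then have s: "sqrt (ln (1 / \<delta>) / (2 * real n)) \<le> sqrt (ln (2 / \<delta>) / (2 * real n))"
          by (rule real_sqrt_le_mono)
        have "0 \<le> sqrt (ln (1 / \<delta>) / (2 * real n))" using lnd n by simp
        with s show ?thesis by linarith
      qed
      finally show ?thesis .
    qed
    ultimately show ?thesis using EFb unfolding bnd_def by linarith
  qed
  have sub: "(UNIV - Good) \<inter> set_pmf ?P \<subseteq> {S. F S \<ge> EF + t}"
  proof
    fix S assume S: "S \<in> (UNIV - Good) \<inter> set_pmf ?P"
    then obtain w where w: "max_l1_margin d n wstar S w" and bad: "test_error d wstar w > bnd"
      unfolding Good_def by force
    have "test_error d wstar w \<le> F S"
      unfolding F_def
      by (rule stepA[OF kk ws n _ w]) (use S set_sample_dist in auto)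
    then show "S \<in> {S. F S \<ge> EF + t}" using bad \<open>EF + t \<le> bnd\<close> by simp
  qed
  have "measure_pmf.prob ?P (UNIV - Good) = measure_pmf.prob ?P ((UNIV - Good) \<inter> set_pmf ?P)"
    by (rule measure_Int_set_pmf[symmetric])
  also have "\<dots> \<le> measure_pmf.prob ?P {S. F S \<ge> EF + t}"
    by (rule measure_pmf.finite_measure_mono[OF sub]) simp
  also have "\<dots> \<le> \<delta>" by (rule tail)
  finally have "measure_pmf.prob ?P (UNIV - Good) \<le> \<delta>" .
  moreover have "measure_pmf.prob ?P (UNIV - Good) = 1 - measure_pmf.prob ?P Good"
    using measure_pmf.prob_compl[of Good ?P] by simp
  ultimately show ?thesis unfolding Good_def bnd_def by linarith
qed



end
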